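(* Let $\rho$ be a regular ordinal, let $\Gamma$ be a presheaf on $\mathbb{T}$, let $X$ be a family over $\Gamma$ all of whose fibres $X(\mathcal{E},\vartheta,\gamma)$ have cardinality strictly smaller than $\rho$, and let $\varphi$ be a predicate over $(\Gamma.X)\times\mathrm{Clk}$. Then for every object $(\mathcal{E},\vartheta)$ of $\mathbb{T}$ and every $\gamma\in\Gamma(\mathcal{E},\vartheta)$ the following are equivalent: (A) there exists $x\in X(\mathcal{E},\vartheta,\gamma)$ such that for all $\alpha<\rho$, $\star\in\varphi(\mathcal{E}\cup\{\lambda_\mathcal{E}\},\vartheta[\lambda_\mathcal{E}\mapsto\alpha],\iota\cdot\gamma,\iota\cdot x,\lambda_\mathcal{E})$; (B) for all $\alpha<\rho$ there exists $x\in X(\mathcal{E}\cup\{\lambda_\mathcal{E}\},\vartheta[\lambda_\mathcal{E}\mapsto\alpha],\iota\cdot\gamma)$ such that $\star\in\varphi(\mathcal{E}\cup\{\lambda_\mathcal{E}\},\vartheta[\lambda_\mathcal{E}\mapsto\alpha],\iota\cdot\gamma,x,\lambda_\mathcal{E})$. (That is, in the model, $\exists x{:}X.\,\forall\kappa.\,\varphi(x,\kappa)$ equals $\forall\kappa.\,\exists x{:}X.\,\varphi(x,\kappa)$.)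
   Context: Fix a limit ordinal $\rho$ (here assumed regular, i.e. equal to its own cofinality) and a countably infinite set of clock names. The category $\mathbb{T}$ has objects pairs $(\mathcal{E},\vartheta)$ with $\mathcal{E}$ a finite set of clock names and $\vartheta:\mathcal{E}\to\rho$; a morphism $(\mathcal{E},\vartheta)\to(\mathcal{E}',\vartheta')$ is a function $\sigma:\mathcal{E}\to\mathcal{E}'$ with $\vartheta'\circ\sigma\le\vartheta$ pointwise. A presheaf on $\mathbb{T}$ is a covariant functor $\mathbb{T}\to\mathsf{Set}$; write $\sigma\cdot x$ for the action of $\sigma$. $\mathrm{Clk}$ is the presheaf $\mathrm{Clk}(\mathcal{E},\vartheta)=\mathcal{E}$ with $\sigma\cdot\lambda=\sigma(\lambda)$. For a presheaf $\Gamma$, $\int\Gamma$ is its category of elements, with objects $(\mathcal{E},\vartheta,\gamma)$; a presheaf $X$ over $\int\Gamma$ is a covariant functor $\int\Gamma\to\mathsf{Set}$ with fibres $X(\mathcal{E},\vartheta,\gamma)$ and maps $\sigma\cdot(-)$. $X$ is invariant under clock introduction if for all $(\mathcal{E},\vartheta)$, $\gamma$, clock names $\lambda\notin\mathcal{E}$ and $\alpha<\rho$, the map $\iota\cdot(-): X(\mathcal{E},\vartheta,\gamma)\to X(\mathcal{E}\cup\{\lambda\},\vartheta[\lambda\mapsto\alpha],\iota\cdot\gamma)$ induced by the inclusion $\iota:\mathcal{E}\to\mathcal{E}\cup\{\lambda\}$ is a bijection. A family over $\Gamma$ is a presheaf over $\int\Gamma$ invariant under clock introduction; a predicate is a family all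 of whose fibres are subsets of $\{\star\}$. The comprehension $\Gamma.X$ is the presheaf $(\Gamma.X)(\mathcal{E},\vartheta)=\{(\gamma,x)\mid\gamma\in\Gamma(\mathcal{E},\vartheta), x\in X(\mathcal{E},\vartheta,\gamma)\}$; thus a predicate $\varphi$ over $(\Gamma.X)\times\mathrm{Clk}$ has fibres $\varphi(\mathcal{E},\vartheta,\gamma,x,\lambda)\subseteq\{\star\}$ for $\lambda\in\mathcal{E}$. A function assigning to each finite set $\mathcal{E}$ of clock names a clock name $\lambda_\mathcal{E}\notin\mathcal{E}$ is fixed, and $\iota$ denotes the inclusion $\mathcal{E}\to\mathcal{E}\cup\{\lambda_\mathcal{E}\}$, viewed as a morphism $(\mathcal{E},\vartheta)\to(\mathcal{E}\cup\{\lambda_\mathcal{E}\},\vartheta[\lambda_\mathcal{E}\mapsto\alpha])$. *)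

theory Defs
  imports Main "HOL-Library.FuncSet" "HOL-Library.Countable"
begin

text \<open>The regular limit ordinal rho is represented by a well-ordered type 'o:
  the ordinals alpha < rho are exactly the elements of 'o.\<close>

definition limit_ord :: "'o::wellorder itself \<Rightarrow> bool" where
  "limit_ord _ \<longleftrightarrow> (\<forall>a::'o. \<exists>b. a < b)"

text \<open>Regular: rho equals its own cofinality, i.e. every cofinal subset of rho has
  order type rho (it is not order-isomorphic to a proper initial segment).\<close>
definition regular_ord :: "'o::wellorder itself \<Rightarrow> bool" where
  "regular_ord _ \<longleftrightarrow>
     (\<forall>S::'o set. (\<forall>a. \<exists>s\<in>S. a \<le> s) \<longrightarrow>
        \<not> (\<exists>(\<alpha>::'o) (f::'o \<Rightarrow> 'o). strict_mono_on {\<beta>. \<beta> < \<alpha>} f \<and> f ` {\<beta>. \<beta> < \<alpha>} = S))"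

text \<open>An object (E, theta) is represented by a partial map theta with finite domain E.\<close>
definition tobj :: "('c \<rightharpoonup> 'o) \<Rightarrow> bool" where
  "tobj \<theta> \<longleftrightarrow> finite (dom \<theta>)"

definition thom :: "('c \<rightharpoonup> 'o::order) \<Rightarrow> ('c \<rightharpoonup> 'o) \<Rightarrow> ('c \<Rightarrow> 'c) \<Rightarrow> bool" where
  "thom \<theta> \<theta>' \<sigma> \<longleftrightarrow> \<sigma> \<in> dom \<theta> \<rightarrow>\<^sub>E dom \<theta>' \<and>
     (\<forall>c\<in>dom \<theta>. the (\<theta>' (\<sigma> c)) \<le> the (\<theta> c))"

definition tid :: "('c \<rightharpoonup> 'o) \<Rightarrow> ('c \<Rightarrow> 'c)" where
  "tid \<theta> = restrict id (dom \<theta>)"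

definition tcomp :: "('c \<rightharpoonup> 'o) \<Rightarrow> ('c \<Rightarrow> 'c) \<Rightarrow> ('c \<Rightarrow> 'c) \<Rightarrow> ('c \<Rightarrow> 'c)" where
  "tcomp \<theta> \<tau> \<sigma> = restrict (\<tau> \<circ> \<sigma>) (dom \<theta>)"

text \<open>A presheaf (covariant functor T -> Set): fibres F theta and action
  act theta theta' sigma for sigma : theta -> theta'.\<close>
definition presheaf ::
  "(('c \<rightharpoonup> 'o::order) \<Rightarrow> 'a set) \<Rightarrow> (('c \<rightharpoonup> 'o) \<Rightarrow> ('c \<rightharpoonup> 'o) \<Rightarrow> ('c \<Rightarrow> 'c) \<Rightarrow> 'a \<Rightarrow> 'a) \<Rightarrow> bool" where
  "presheaf F act \<longleftrightarrow>
     (\<forall>\<theta> \<theta>' \<sigma> a. tobj \<theta> \<and> tobj \<theta>' \<and> thom \<theta> \<theta>' \<sigma> \<and> a \<in> F \<theta> \<longrightarrow> act \<theta> \<theta>' \<sigma> a \<in> F \<theta>') \<and>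
     (\<forall>\<theta> a. tobj \<theta> \<and> a \<in> F \<theta> \<longrightarrow> act \<theta> \<theta> (tid \<theta>) a = a) \<and>
     (\<forall>\<theta> \<theta>' \<theta>'' \<sigma> \<tau> a. tobj \<theta> \<and> tobj \<theta>' \<and> tobj \<theta>'' \<and> thom \<theta> \<theta>' \<sigma> \<and> thom \<theta>' \<theta>'' \<tau> \<and> a \<in> F \<theta>
        \<longrightarrow> act \<theta> \<theta>'' (tcomp \<theta> \<tau> \<sigma>) a = act \<theta>' \<theta>'' \<tau> (act \<theta> \<theta>' \<sigma> a))"

text \<open>A presheaf over the category of elements of (G, Gact): fibres X theta g and
  action Xact theta theta' sigma g : X theta g -> X theta' (Gact theta theta' sigma g).\<close>
definition presheaf_over ::
  "(('c \<rightharpoonup> 'o::order) \<Rightarrow> 'g set) \<Rightarrow> (('c \<rightharpoonup> 'o) \<Rightarrow> ('c \<rightharpoonup> 'o) \<Rightarrow> ('c \<Rightarrow> 'c) \<Rightarrow> 'g \<Rightarrow> 'g) \<Rightarrow>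
   (('c \<rightharpoonup> 'o) \<Rightarrow> 'g \<Rightarrow> 'x set) \<Rightarrow> (('c \<rightharpoonup> 'o) \<Rightarrow> ('c \<rightharpoonup> 'o) \<Rightarrow> ('c \<Rightarrow> 'c) \<Rightarrow> 'g \<Rightarrow> 'x \<Rightarrow> 'x) \<Rightarrow> bool" where
  "presheaf_over G Gact X Xact \<longleftrightarrow>
     (\<forall>\<theta> \<theta>' \<sigma> g x. tobj \<theta> \<and> tobj \<theta>' \<and> thom \<theta> \<theta>' \<sigma> \<and> g \<in> G \<theta> \<and> x \<in> X \<theta> g
        \<longrightarrow> Xact \<theta> \<theta>' \<sigma> g x \<in> X \<theta>' (Gact \<theta> \<theta>' \<sigma> g)) \<and>
     (\<forall>\<theta> g x. tobj \<theta> \<and> g \<in> G \<theta> \<and> x \<in> X \<theta> g \<longrightarrow> Xact \<theta> \<theta> (tid \<theta>) g x = x) \<and>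
     (\<forall>\<theta> \<theta>' \<theta>'' \<sigma> \<tau> g x. tobj \<theta> \<and> tobj \<theta>' \<and> tobj \<theta>'' \<and> thom \<theta> \<theta>' \<sigma> \<and> thom \<theta>' \<theta>'' \<tau>
        \<and> g \<in> G \<theta> \<and> x \<in> X \<theta> g
        \<longrightarrow> Xact \<theta> \<theta>'' (tcomp \<theta> \<tau> \<sigma>) g x = Xact \<theta>' \<theta>'' \<tau> (Gact \<theta> \<theta>' \<sigma> g) (Xact \<theta> \<theta>' \<sigma> g x))"

text \<open>Family: presheaf over the category of elements, invariant under clock introduction.\<close>
definition family ::
  "(('c \<rightharpoonup> 'o::order) \<Rightarrow> 'g set) \<Rightarrow> (('c \<rightharpoonup> 'o) \<Rightarrow> ('c \<rightharpoonup> 'o) \<Rightarrow> ('c \<Rightarrow> 'c) \<Rightarrow> 'g \<Rightarrow> 'g) \<Rightarrow>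
   (('c \<rightharpoonup> 'o) \<Rightarrow> 'g \<Rightarrow> 'x set) \<Rightarrow> (('c \<rightharpoonup> 'o) \<Rightarrow> ('c \<rightharpoonup> 'o) \<Rightarrow> ('c \<Rightarrow> 'c) \<Rightarrow> 'g \<Rightarrow> 'x \<Rightarrow> 'x) \<Rightarrow> bool" where
  "family G Gact X Xact \<longleftrightarrow> presheaf_over G Gact X Xact \<and>
     (\<forall>\<theta> g l \<alpha>. tobj \<theta> \<and> g \<in> G \<theta> \<and> l \<notin> dom \<theta> \<longrightarrow>
        bij_betw (Xact \<theta> (\<theta>(l \<mapsto> \<alpha>)) (tid \<theta>) g) (X \<theta> g)
                 (X (\<theta>(l \<mapsto> \<alpha>)) (Gact \<theta> (\<theta>(l \<mapsto> \<alpha>)) (tid \<theta>) g)))"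

text \<open>A predicate is a family whose fibres are subsets of {star}; we use the unit type.\<close>
definition predicate ::
  "(('c \<rightharpoonup> 'o::order) \<Rightarrow> 'g set) \<Rightarrow> (('c \<rightharpoonup> 'o) \<Rightarrow> ('c \<rightharpoonup> 'o) \<Rightarrow> ('c \<Rightarrow> 'c) \<Rightarrow> 'g \<Rightarrow> 'g) \<Rightarrow>
   (('c \<rightharpoonup> 'o) \<Rightarrow> 'g \<Rightarrow> unit set) \<Rightarrow> (('c \<rightharpoonup> 'o) \<Rightarrow> ('c \<rightharpoonup> 'o) \<Rightarrow> ('c \<Rightarrow> 'c) \<Rightarrow> 'g \<Rightarrow> unit \<Rightarrow> unit) \<Rightarrow> bool" where
  "predicate G Gact P Pact \<longleftrightarrow> family G Gact P Pact"

definition compr :: "(('c \<rightharpoonup> 'o) \<Rightarrow> 'g set) \<Rightarrow> (('c \<rightharpoonup> 'o) \<Rightarrow> 'g \<Rightarrow> 'x set) \<Rightarrow> ('c \<rightharpoonup> 'o) \<Rightarrow> ('g \<times> 'x) set" where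
  "compr G X \<theta> = {(g, x). g \<in> G \<theta> \<and> x \<in> X \<theta> g}"

definition compr_act ::
  "(('c \<rightharpoonup> 'o) \<Rightarrow> ('c \<rightharpoonup> 'o) \<Rightarrow> ('c \<Rightarrow> 'c) \<Rightarrow> 'g \<Rightarrow> 'g) \<Rightarrow>
   (('c \<rightharpoonup> 'o) \<Rightarrow> ('c \<rightharpoonup> 'o) \<Rightarrow> ('c \<Rightarrow> 'c) \<Rightarrow> 'g \<Rightarrow> 'x \<Rightarrow> 'x) \<Rightarrow>
   ('c \<rightharpoonup> 'o) \<Rightarrow> ('c \<rightharpoonup> 'o) \<Rightarrow> ('c \<Rightarrow> 'c) \<Rightarrow> 'g \<times> 'x \<Rightarrow> 'g \<times> 'x" where
  "compr_act Gact Xact \<theta> \<theta>' \<sigma> gx = (Gact \<theta> \<theta>' \<sigma> (fst gx), Xact \<theta> \<theta>' \<sigma> (fst gx) (snd gx))"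

text \<open>Binary product of a presheaf with Clk, where Clk(E, theta) = E.\<close>
definition times_clk :: "(('c \<rightharpoonup> 'o) \<Rightarrow> 'a set) \<Rightarrow> ('c \<rightharpoonup> 'o) \<Rightarrow> ('a \<times> 'c) set" where
  "times_clk F \<theta> = F \<theta> \<times> dom \<theta>"

definition times_clk_act ::
  "(('c \<rightharpoonup> 'o) \<Rightarrow> ('c \<rightharpoonup> 'o) \<Rightarrow> ('c \<Rightarrow> 'c) \<Rightarrow> 'a \<Rightarrow> 'a) \<Rightarrow>
   ('c \<rightharpoonup> 'o) \<Rightarrow> ('c \<rightharpoonup> 'o) \<Rightarrow> ('c \<Rightarrow> 'c) \<Rightarrow> 'a \<times> 'c \<Rightarrow> 'a \<times> 'c" where
  "times_clk_act act \<theta> \<theta>' \<sigma> ac = (act \<theta> \<theta>' \<sigma> (fst ac), \<sigma> (snd ac))"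

end

theory Submission imports Defs begin
lemma wo_le: "Well_order {(x::'o::wellorder, y). x \<le> y}"
  unfolding well_order_on_def linear_order_on_def partial_order_on_def preorder_on_def
    total_on_def refl_on_def trans_def antisym_def
  apply (auto simp: Field_def)
  apply (rule wf_subset[OF wf])
  by auto

lemma reg_bounded:
  assumes reg: "regular_ord TYPE('o::wellorder)"
    and card: "(card_of (B::'o set), card_of (UNIV :: 'o set)) \<in> ordLess"
  shows "\<exists>a. \<forall>s\<in>B. s < a"
proof (rule ccontr)
  assume "\<not> ?thesis"
  hence cof: "\<forall>a. \<exists>s\<in>B. a \<le> s" by (auto simp: not_less)
  define r0 where "r0 = {(x::'o, y). x \<le> y}"
  define r where "r = Restr r0 B"
  have w0: "Well_order r0" unfolding r0_def by (rule wo_le)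
  have w: "Well_order r" unfolding r_def using w0 by (rule Well_order_Restr)
  have refl0: "Refl r0" using w0 by (simp add: well_order_on_def linear_order_on_def partial_order_on_def preorder_on_def)
  have F0: "Field r0 = UNIV" unfolding r0_def Field_def by auto
  have F: "Field r = B" unfolding r_def using refl0 F0 Refl_Field_Restr2[of r0 B] by auto
  have "(r, r0) \<in> ordLess"
  proof (rule ccontr)
    assume "(r, r0) \<notin> ordLess"
    hence "(r0, r) \<in> ordLeq" using ordLess_or_ordLeq[OF w w0] by blast
    hence "(card_of (Field r0), card_of (Field r)) \<in> ordLeq" by (rule card_of_mono2)
    hence "(card_of (UNIV::'o set), card_of B) \<in> ordLeq" using F F0 by simp
    thus False using card not_ordLess_ordLeq by blast
  qed
  then obtain a where "(r, Restr r0 (underS r0 a)) \<in> ordIso"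
    using ordLess_iff_ordIso_Restr[OF w0 w] by blast
  hence "(Restr r0 (underS r0 a), r) \<in> ordIso" by (rule ordIso_symmetric)
  then obtain f where iso: "iso (Restr r0 (underS r0 a)) r f" unfolding ordIso_def by blast
  have U: "underS r0 a = {b. b < a}" unfolding underS_def r0_def by auto
  have FU: "Field (Restr r0 (underS r0 a)) = {b. b < a}"
    using refl0 F0 Refl_Field_Restr2[of r0 "underS r0 a"] U by auto
  have bij: "bij_betw f {b. b < a} B" and ord: "\<forall>x\<in>{b. b < a}. \<forall>y\<in>{b. b < a}. (x, y) \<in> Restr r0 (underS r0 a) \<longleftrightarrow> (f x, f y) \<in> r"
    using iso unfolding iso_iff2 FU F by auto
  have sm: "strict_mono_on {b. b < a} f"
  proof (rule strict_mono_onI)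
    fix x y assume x: "x \<in> {b. b < a}" and y: "y \<in> {b. b < a}" and xy: "x < y"
    have "(x, y) \<in> Restr r0 (underS r0 a)" using x y xy U unfolding r0_def by auto
    hence "(f x, f y) \<in> r" using ord x y by blast
    hence "f x \<le> f y" unfolding r_def r0_def by auto
    moreover have "f x \<noteq> f y"
    proof
      assume "f x = f y"
      hence "x = y" using inj_onD[OF bij_betw_imp_inj_on[OF bij]] x y by blast
      thus False using xy by simp
    qed
    ultimately show "f x < f y" by simp
  qed
  have "f ` {b. b < a} = B" using bij by (simp add: bij_betw_def)
  thus False using reg cof sm unfolding regular_ord_def by blast
qed
theorem mainTheorem5:
  fixes G :: "('c::countable \<rightharpoonup> 'o::wellorder) \<Rightarrow> 'g set"
    and Gact :: "('c \<rightharpoonup> 'o) \<Rightarrow> ('c \<rightharpoonup> 'o) \<Rightarrow> ('c \<Rightarrow> 'c) \<Rightarrow> 'g \<Rightarrow> 'g"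
    and X :: "('c \<rightharpoonup> 'o) \<Rightarrow> 'g \<Rightarrow> 'x set"
    and Xact :: "('c \<rightharpoonup> 'o) \<Rightarrow> ('c \<rightharpoonup> 'o) \<Rightarrow> ('c \<Rightarrow> 'c) \<Rightarrow> 'g \<Rightarrow> 'x \<Rightarrow> 'x"
    and \<phi> :: "('c \<rightharpoonup> 'o) \<Rightarrow> ('g \<times> 'x) \<times> 'c \<Rightarrow> unit set"
    and \<phi>act :: "('c \<rightharpoonup> 'o) \<Rightarrow> ('c \<rightharpoonup> 'o) \<Rightarrow> ('c \<Rightarrow> 'c) \<Rightarrow> ('g \<times> 'x) \<times> 'c \<Rightarrow> unit \<Rightarrow> unit"
    and fresh :: "'c set \<Rightarrow> 'c"
    and \<theta> :: "'c \<rightharpoonup> 'o"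
    and \<gamma> :: 'g
  assumes "infinite (UNIV :: 'c set)"
    and "limit_ord TYPE('o)"
    and "regular_ord TYPE('o)"
    and "presheaf G Gact"
    and "family G Gact X Xact"
    and "\<forall>\<theta>' \<gamma>'. tobj \<theta>' \<and> \<gamma>' \<in> G \<theta>' \<longrightarrow> (card_of (X \<theta>' \<gamma>'), card_of (UNIV :: 'o set)) \<in> ordLess"
    and "predicate (times_clk (compr G X)) (times_clk_act (compr_act Gact Xact)) \<phi> \<phi>act"
    and "\<forall>E. finite E \<longrightarrow> fresh E \<notin> E"
    and "tobj \<theta>"
    and "\<gamma> \<in> G \<theta>"
  shows "(\<exists>x \<in> X \<theta> \<gamma>. \<forall>\<alpha>::'o.
            () \<in> \<phi> (\<theta>(fresh (dom \<theta>) \<mapsto> \<alpha>))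
                   ((Gact \<theta> (\<theta>(fresh (dom \<theta>) \<mapsto> \<alpha>)) (tid \<theta>) \<gamma>,
                     Xact \<theta> (\<theta>(fresh (dom \<theta>) \<mapsto> \<alpha>)) (tid \<theta>) \<gamma> x),
                    fresh (dom \<theta>)))
     \<longleftrightarrow>
     (\<forall>\<alpha>::'o. \<exists>x \<in> X (\<theta>(fresh (dom \<theta>) \<mapsto> \<alpha>)) (Gact \<theta> (\<theta>(fresh (dom \<theta>) \<mapsto> \<alpha>)) (tid \<theta>) \<gamma>).
            () \<in> \<phi> (\<theta>(fresh (dom \<theta>) \<mapsto> \<alpha>))
                   ((Gact \<theta> (\<theta>(fresh (dom \<theta>) \<mapsto> \<alpha>)) (tid \<theta>) \<gamma>, x), fresh (dom \<theta>)))"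
proof -
  note fam = assms(5) and pre = assms(7)
  define l where "l = fresh (dom \<theta>)"
  define th where "th = (\<lambda>\<alpha>::'o. \<theta>(l \<mapsto> \<alpha>))"
  define \<iota> where "\<iota> = tid \<theta>"
  define P where "P = (\<lambda>x \<alpha>. () \<in> \<phi> (th \<alpha>) ((Gact \<theta> (th \<alpha>) \<iota> \<gamma>, Xact \<theta> (th \<alpha>) \<iota> \<gamma> x), l))"
  have lnot: "l \<notin> dom \<theta>" using assms(8,9) unfolding l_def tobj_def by blast
  have tobj_th: "tobj (th \<alpha>)" for \<alpha> using assms(9) unfolding th_def tobj_def by auto
  have hom1: "thom \<theta> (th \<alpha>) \<iota>" for \<alpha>
    using lnot unfolding thom_def th_def \<iota>_def tid_def by auto
  have hom2: "thom (th \<beta>) (th \<alpha>) (tid (th \<beta>))" if "\<alpha> \<le> \<beta>" for \<alpha> \<beta>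
    using that unfolding thom_def th_def tid_def by auto
  have comp: "tcomp \<theta> (tid (th \<beta>)) \<iota> = \<iota>" for \<beta>
    unfolding tcomp_def tid_def \<iota>_def th_def by (auto simp: restrict_def)
  have PG: "\<forall>\<theta> \<theta>' \<sigma> a. tobj \<theta> \<and> tobj \<theta>' \<and> thom \<theta> \<theta>' \<sigma> \<and> a \<in> G \<theta> \<longrightarrow> Gact \<theta> \<theta>' \<sigma> a \<in> G \<theta>'"
   and PG3: "\<forall>\<theta> \<theta>' \<theta>'' \<sigma> \<tau> a. tobj \<theta> \<and> tobj \<theta>' \<and> tobj \<theta>'' \<and> thom \<theta> \<theta>' \<sigma> \<and> thom \<theta>' \<theta>'' \<tau> \<and> a \<in> G \<theta>
        \<longrightarrow> Gact \<theta> \<theta>'' (tcomp \<theta> \<tau> \<sigma>) a = Gact \<theta>' \<theta>'' \<tau> (Gact \<theta> \<theta>' \<sigma> a)"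
    using assms(4) unfolding presheaf_def by blast+
  have PX: "\<forall>\<theta> \<theta>' \<sigma> g x. tobj \<theta> \<and> tobj \<theta>' \<and> thom \<theta> \<theta>' \<sigma> \<and> g \<in> G \<theta> \<and> x \<in> X \<theta> g
        \<longrightarrow> Xact \<theta> \<theta>' \<sigma> g x \<in> X \<theta>' (Gact \<theta> \<theta>' \<sigma> g)"
   and PX3: "\<forall>\<theta> \<theta>' \<theta>'' \<sigma> \<tau> g x. tobj \<theta> \<and> tobj \<theta>' \<and> tobj \<theta>'' \<and> thom \<theta> \<theta>' \<sigma> \<and> thom \<theta>' \<theta>'' \<tau>
        \<and> g \<in> G \<theta> \<and> x \<in> X \<theta> g
        \<longrightarrow> Xact \<theta> \<theta>'' (tcomp \<theta> \<tau> \<sigma>) g x = Xact \<theta>' \<theta>'' \<tau> (Gact \<theta> \<theta>' \<sigma> g) (Xact \<theta> \<theta>' \<sigma> g x)"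
   and Xbij: "\<forall>\<theta> g l \<alpha>. tobj \<theta> \<and> g \<in> G \<theta> \<and> l \<notin> dom \<theta> \<longrightarrow>
        bij_betw (Xact \<theta> (\<theta>(l \<mapsto> \<alpha>)) (tid \<theta>) g) (X \<theta> g)
                 (X (\<theta>(l \<mapsto> \<alpha>)) (Gact \<theta> (\<theta>(l \<mapsto> \<alpha>)) (tid \<theta>) g))"
    using fam unfolding family_def presheaf_over_def by blast+
  have Pphi: "\<forall>\<theta> \<theta>' \<sigma> g x. tobj \<theta> \<and> tobj \<theta>' \<and> thom \<theta> \<theta>' \<sigma> \<and> g \<in> times_clk (compr G X) \<theta> \<and> x \<in> \<phi> \<theta> g
        \<longrightarrow> \<phi>act \<theta> \<theta>' \<sigma> g x \<in> \<phi> \<theta>' (times_clk_act (compr_act Gact Xact) \<theta> \<theta>' \<sigma> g)"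
    using pre unfolding predicate_def family_def presheaf_over_def by blast
  have Gin: "Gact \<theta> (th \<alpha>) \<iota> \<gamma> \<in> G (th \<alpha>)" for \<alpha>
    using PG tobj_th hom1 assms(9,10) by blast
  have Xin: "Xact \<theta> (th \<alpha>) \<iota> \<gamma> x \<in> X (th \<alpha>) (Gact \<theta> (th \<alpha>) \<iota> \<gamma>)" if "x \<in> X \<theta> \<gamma>" for x \<alpha>
    using PX tobj_th hom1 assms(9,10) that by blast
  have down: "P x \<alpha>" if x: "x \<in> X \<theta> \<gamma>" and ab: "\<alpha> \<le> \<beta>" and Pb: "P x \<beta>" for x \<alpha> \<beta>
  proof -
    define g where "g = ((Gact \<theta> (th \<beta>) \<iota> \<gamma>, Xact \<theta> (th \<beta>) \<iota> \<gamma> x), l)"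
    have gin: "g \<in> times_clk (compr G X) (th \<beta>)"
      unfolding g_def times_clk_def compr_def using Gin Xin[OF x] by (auto simp: th_def)
    have "\<phi>act (th \<beta>) (th \<alpha>) (tid (th \<beta>)) g () \<in> \<phi> (th \<alpha>) (times_clk_act (compr_act Gact Xact) (th \<beta>) (th \<alpha>) (tid (th \<beta>)) g)"
      using Pphi tobj_th hom2[OF ab] gin Pb unfolding P_def g_def by blast
    moreover have "Gact (th \<beta>) (th \<alpha>) (tid (th \<beta>)) (Gact \<theta> (th \<beta>) \<iota> \<gamma>) = Gact \<theta> (th \<alpha>) \<iota> \<gamma>"
      using PG3 tobj_th hom1 hom2[OF ab] assms(9,10) comp by metis
    moreover have "Xact (th \<beta>) (th \<alpha>) (tid (th \<beta>)) (Gact \<theta> (th \<beta>) \<iota> \<gamma>) (Xact \<theta> (th \<beta>) \<iota> \<gamma> x) = Xact \<theta> (th \<alpha>) \<iota> \<gamma> x"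
      using PX3 tobj_th hom1 hom2[OF ab] assms(9,10) comp x by metis
    moreover have "tid (th \<beta>) l = l" unfolding tid_def th_def by simp
    ultimately show ?thesis unfolding P_def g_def times_clk_act_def compr_act_def by simp
  qed
  have bij: "bij_betw (Xact \<theta> (th \<alpha>) \<iota> \<gamma>) (X \<theta> \<gamma>) (X (th \<alpha>) (Gact \<theta> (th \<alpha>) \<iota> \<gamma>))" for \<alpha>
    using Xbij assms(9,10) lnot unfolding th_def \<iota>_def by blast
  have "(\<exists>x \<in> X \<theta> \<gamma>. \<forall>\<alpha>. P x \<alpha>) \<longleftrightarrow> (\<forall>\<alpha>. \<exists>x \<in> X (th \<alpha>) (Gact \<theta> (th \<alpha>) \<iota> \<gamma>).
            () \<in> \<phi> (th \<alpha>) ((Gact \<theta> (th \<alpha>) \<iota> \<gamma>, x), l))"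
  proof
    assume "\<exists>x \<in> X \<theta> \<gamma>. \<forall>\<alpha>. P x \<alpha>"
    thus "\<forall>\<alpha>. \<exists>x \<in> X (th \<alpha>) (Gact \<theta> (th \<alpha>) \<iota> \<gamma>). () \<in> \<phi> (th \<alpha>) ((Gact \<theta> (th \<alpha>) \<iota> \<gamma>, x), l)"
      using Xin unfolding P_def by blast
  next
    assume B: "\<forall>\<alpha>. \<exists>x \<in> X (th \<alpha>) (Gact \<theta> (th \<alpha>) \<iota> \<gamma>). () \<in> \<phi> (th \<alpha>) ((Gact \<theta> (th \<alpha>) \<iota> \<gamma>, x), l)"
    have B': "\<exists>x \<in> X \<theta> \<gamma>. P x \<alpha>" for \<alpha>
    proof -
      obtain y where y: "y \<in> X (th \<alpha>) (Gact \<theta> (th \<alpha>) \<iota> \<gamma>)" and py: "() \<in> \<phi> (th \<alpha>) ((Gact \<theta> (th \<alpha>) \<iota> \<gamma>, y), l)"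
        using B by blast
      obtain x where "x \<in> X \<theta> \<gamma>" "y = Xact \<theta> (th \<alpha>) \<iota> \<gamma> x"
        using y bij_betw_imp_surj_on[OF bij[of \<alpha>]] by blast
      thus ?thesis using py unfolding P_def by blast
    qed
    show "\<exists>x \<in> X \<theta> \<gamma>. \<forall>\<alpha>. P x \<alpha>"
    proof (rule ccontr)
      assume "\<not> ?thesis"
      hence nb: "\<forall>x\<in>X \<theta> \<gamma>. \<exists>b. \<not> P x b" by blast
      define bnd where "bnd = (\<lambda>x. SOME b. \<not> P x b)"
      have nbx: "\<not> P x (bnd x)" if "x \<in> X \<theta> \<gamma>" for x
      proof -
        from nb that obtain b where "\<not> P x b" by blast
        thus ?thesis unfolding bnd_def by (rule someI[of "\<lambda>b. \<not> P x b"])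
      qed
      have "(card_of (bnd ` X \<theta> \<gamma>), card_of (X \<theta> \<gamma>)) \<in> ordLeq" by (rule card_of_image)
      moreover have "(card_of (X \<theta> \<gamma>), card_of (UNIV :: 'o set)) \<in> ordLess"
        using assms(6,9,10) by blast
      ultimately have "(card_of (bnd ` X \<theta> \<gamma>), card_of (UNIV :: 'o set)) \<in> ordLess"
        by (rule ordLeq_ordLess_trans)
      then obtain a where a: "\<forall>s\<in>bnd ` X \<theta> \<gamma>. s < a" using reg_bounded assms(3) by blast
      obtain x where x: "x \<in> X \<theta> \<gamma>" and "P x a" using B' by blast
      moreover have "bnd x < a" using a x by blast
      ultimately have "P x (bnd x)" using down by (meson less_imp_le)
      thus False using nbx x by blast
    qed
  qed
  thus ?thesis unfolding P_def th_def \<iota>_def l_def .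
qed

end
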